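(* For every $\varepsilon>0$ and every $A\subseteq\mathbb R$ containing a nonempty open interval, $\mathfrak{ss}_e^\varepsilon=\mathfrak{ss}_l^A=\mathfrak{ss}_c$.
   Context: Let $\mathfrak S_{cc}$ be the set of all sequences $\mathbf a=\langle a_i:i\in\omega\rangle$ of rational numbers with $a_i\to0$ such that $\sum_i a_i$ is conditionally convergent (converges to a real number, with the positive terms summing to $+\infty$ and the negative terms to $-\infty$). Let $[\omega]^\omega_\omega$ be the set of infinite coinfinite subsets of $\omega$; for such $X$ with increasing enumeration $\langle i_n\rangle$, $\sum_X\mathbf a$ denotes $\sum_n a_{i_n}$. $\mathfrak{ss}_c$ is the least cardinality of $\mathcal X\subseteq[\omega]^\omega_\omega$ such that every $\mathbf a\in\mathfrak S_{cc}$ has some $X\in\mathcal X$ with $\sum_X\mathbf a$ convergent (to a real number). For $A\subseteq\mathbb R$, $\mathfrak{ss}_l^A$ is the least cardinality of $\mathcal X\subseteq[\omega]^\omega_\omega$ such that every $\mathbf a\in\mathfrak S_{cc}$ has some $X\in\mathcal X$ for which $\sum_X\mathbf a$ converges to a limit in $A$. For $\varepsilon>0$, $\mathfrak{ss}_e^\varepsilon$ is the least cardinality of $\mathcal X\subseteq[\omega]^\omega_\omega$ such that every $\mathbf a\in\mathfrak S_{cc}$ has some $X\in\mathcal X$ for which $\sum_X\mathbf a$ converges to a limit in $(\sum\mathbf a-\varepsilon,\sum\mathbf a+\varepsilon)$. *)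

theory Defs
  imports Complex_Main "HOL-Library.Infinite_Set"
begin

definition S_cc :: "(nat \<Rightarrow> real) set" where
  "S_cc = {a. (\<forall>i. a i \<in> \<rat>) \<and> a \<longlonglongrightarrow> 0 \<and> summable a \<and>
      filterlim (\<lambda>n. \<Sum>i<n. max (a i) 0) at_top sequentially \<and>
      filterlim (\<lambda>n. \<Sum>i<n. min (a i) 0) at_bot sequentially}"

definition inf_coinf :: "nat set set" where
  "inf_coinf = {X. infinite X \<and> infinite (UNIV - X)}"

definition subser :: "(nat \<Rightarrow> real) \<Rightarrow> nat set \<Rightarrow> nat \<Rightarrow> real" where
  "subser a X = (\<lambda>n. a (Infinite_Set.enumerate X n))"

definition ss_c_family :: "nat set set \<Rightarrow> bool" where
  "ss_c_family \<X> \<longleftrightarrow> \<X> \<subseteq> inf_coinf \<and>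
     (\<forall>a\<in>S_cc. \<exists>X\<in>\<X>. summable (subser a X))"

definition ss_l_family :: "real set \<Rightarrow> nat set set \<Rightarrow> bool" where
  "ss_l_family A \<X> \<longleftrightarrow> \<X> \<subseteq> inf_coinf \<and>
     (\<forall>a\<in>S_cc. \<exists>X\<in>\<X>. \<exists>L\<in>A. subser a X sums L)"

definition ss_e_family :: "real \<Rightarrow> nat set set \<Rightarrow> bool" where
  "ss_e_family \<epsilon> \<X> \<longleftrightarrow> \<X> \<subseteq> inf_coinf \<and>
     (\<forall>a\<in>S_cc. \<exists>X\<in>\<X>. \<exists>L. subser a X sums L \<and>
        L \<in> {suminf a - \<epsilon> <..< suminf a + \<epsilon>})"

text \<open>The least cardinality of a family satisfying P, as a cardinal (a well-order,
  compared up to isomorphism ordIso, as usual for HOL cardinals).\<close>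
definition mincard :: "(nat set set \<Rightarrow> bool) \<Rightarrow> nat set rel" where
  "mincard P = card_of (SOME \<X>. P \<X> \<and> (\<forall>\<Y>. P \<Y> \<longrightarrow> (card_of \<X>, card_of \<Y>) \<in> ordLeq))"

end

theory Submission
  imports Defs "HOL-Library.Countable_Set_Type"
begin

unbundle cardinal_syntax


definition mask :: "(nat \<Rightarrow> real) \<Rightarrow> nat set \<Rightarrow> nat \<Rightarrow> real" where
  "mask a X = (\<lambda>i. if i \<in> X then a i else 0)"

lemma subser_sums_iff:
  assumes "infinite X"
  shows "subser a X sums L \<longleftrightarrow> mask a X sums L"
proof -
  have "(\<lambda>n. mask a X (enumerate X n)) sums L \<longleftrightarrow> mask a X sums L"
    by (rule sums_mono_reindex) (auto simp: strict_mono_enumerate range_enumerate assms mask_def)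
  moreover have "(\<lambda>n. mask a X (enumerate X n)) = subser a X"
    using enumerate_in_set[OF assms] by (auto simp: mask_def subser_def)
  ultimately show ?thesis by simp
qed

lemma subser_summable_iff:
  assumes "infinite X"
  shows "summable (subser a X) \<longleftrightarrow> summable (mask a X)"
  using subser_sums_iff[OF assms] by (auto simp: summable_def)

lemma inf_coinf_symdiff:
  assumes "X \<in> inf_coinf" "finite F"
  shows "(X - F) \<union> (F - X) \<in> inf_coinf"
proof -
  have "infinite (X - F)" using assms by (auto simp: inf_coinf_def)
  moreover have "infinite ((UNIV - X) - F)" using assms by (auto simp: inf_coinf_def)
  moreover have "X - F \<subseteq> (X - F) \<union> (F - X)" by blast
  moreover have "(UNIV - X) - F \<subseteq> UNIV - ((X - F) \<union> (F - X))" by blast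
  ultimately show ?thesis unfolding inf_coinf_def
    using infinite_super by blast
qed

lemma inf_coinf_compl:
  assumes "X \<in> inf_coinf" shows "UNIV - X \<in> inf_coinf"
  using assms by (auto simp: inf_coinf_def Diff_Diff_Int)



lemma sum_split_N:
  fixes f :: "nat \<Rightarrow> real"
  assumes "N \<le> n"
  shows "(\<Sum>i<n. f i) = (\<Sum>i<N. f i) + (\<Sum>i\<in>{N..<n}. f i)"
proof -
  have "{..<n} = {..<N} \<union> {N..<n}" using assms by auto
  moreover have "{..<N} \<inter> {N..<n} = {}" by auto
  ultimately show ?thesis by (simp add: sum.union_disjoint)
qed

lemma greedy_pos:
  fixes b :: "nat \<Rightarrow> real"
  assumes b0: "b \<longlonglongrightarrow> 0"
    and P: "filterlim (\<lambda>n. \<Sum>i<n. max (b i) 0) at_top sequentially"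
    and t: "t > 0" and d: "\<delta> > 0"
  shows "\<exists>F. finite F \<and> t \<le> sum b F \<and> sum b F < t + \<delta>"
proof -
  obtain N where N: "\<forall>i\<ge>N. norm (b i - 0) < \<delta>" using LIMSEQ_D[OF b0 d] by blast
  define S where "S n = (\<Sum>i\<in>{N..<n}. max (b i) 0)" for n
  define C where "C = (\<Sum>i<N. max (b i) 0)"
  have "eventually (\<lambda>n. t + C \<le> (\<Sum>i<n. max (b i) 0)) sequentially"
    using P by (simp add: filterlim_at_top)
  moreover have "eventually (\<lambda>n. N \<le> n) sequentially" by (rule eventually_ge_at_top)
  ultimately have "eventually (\<lambda>n. N \<le> n \<and> t + C \<le> (\<Sum>i<n. max (b i) 0)) sequentially"
    by eventually_elim auto
  then obtain n where n: "N \<le> n" "t + C \<le> (\<Sum>i<n. max (b i) 0)"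
    using eventually_sequentially by auto
  have ex: "N \<le> n \<and> t \<le> S n" using n sum_split_N[OF n(1), of "\<lambda>i. max (b i) 0"]
    by (simp add: S_def C_def)
  define n0 where "n0 = (LEAST n. N \<le> n \<and> t \<le> S n)"
  have n0: "N \<le> n0 \<and> t \<le> S n0" unfolding n0_def by (rule LeastI[of _ n], rule ex)
  have "n0 \<noteq> N" using n0 t by (auto simp: S_def)
  then obtain m where m: "n0 = Suc m" "N \<le> m" using n0
    by (metis Suc_le_D le_SucE le_antisym not_less_eq_eq)
  have "\<not> (N \<le> m \<and> t \<le> S m)" using not_less_Least[of m "\<lambda>n. N \<le> n \<and> t \<le> S n"] m
    unfolding n0_def[symmetric] by simp
  hence Sm: "S m < t" using m by simp
  have "S n0 = S m + max (b m) 0" using m by (simp add: S_def)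
  moreover have "max (b m) 0 < \<delta>" using N m d by auto
  ultimately have Slt: "S n0 < t + \<delta>" using Sm by linarith
  define F where "F = {i\<in>{N..<n0}. 0 < b i}"
  have "sum b F = (\<Sum>i\<in>{N..<n0}. if 0 < b i then b i else 0)"
    unfolding F_def by (rule sum.inter_filter) simp
  also have "\<dots> = S n0" unfolding S_def by (rule sum.cong) auto
  finally show ?thesis using n0 Slt by (intro exI[of _ F]) (auto simp: F_def)
qed

lemma greedy:
  fixes b :: "nat \<Rightarrow> real"
  assumes b0: "b \<longlonglongrightarrow> 0"
    and P: "filterlim (\<lambda>n. \<Sum>i<n. max (b i) 0) at_top sequentially"
    and Q: "filterlim (\<lambda>n. \<Sum>i<n. min (b i) 0) at_bot sequentially"
    and d: "\<delta> > 0"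
  shows "\<exists>F. finite F \<and> \<bar>sum b F - t\<bar> < \<delta>"
proof -
  consider "t > 0" | "t = 0" | "t < 0" by linarith
  then show ?thesis
  proof cases
    case 1
    then show ?thesis using greedy_pos[OF b0 P 1 d] by force
  next
    case 2
    then show ?thesis using d by (intro exI[of _ "{}"]) auto
  next
    case 3
    have b0': "(\<lambda>i. - b i) \<longlonglongrightarrow> 0" using tendsto_minus[OF b0] by simp
    have "(\<lambda>n. \<Sum>i<n. max (- b i) 0) = (\<lambda>n. - (\<Sum>i<n. min (b i) 0))"
      by (auto simp: sum_negf[symmetric] intro!: sum.cong)
    moreover have "filterlim (\<lambda>n. - (\<Sum>i<n. min (b i) 0)) at_top sequentially"
      using filterlim_uminus_at_bot[of "\<lambda>n. \<Sum>i<n. min (b i) 0" sequentially] Q by simp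
    ultimately have P': "filterlim (\<lambda>n. \<Sum>i<n. max (- b i) 0) at_top sequentially"
      by simp
    obtain F where F: "finite F" "- t \<le> sum (\<lambda>i. - b i) F" "sum (\<lambda>i. - b i) F < - t + \<delta>"
      using greedy_pos[OF b0' P' _ d, of "-t"] 3 by auto
    then show ?thesis by (intro exI[of _ F]) (auto simp: sum_negf)
  qed
qed

lemma core:
  assumes a: "a \<in> S_cc" and X: "mask a X sums c" and uv: "u < v"
  shows "\<exists>F. finite F \<and> (\<exists>L. mask a ((X - F) \<union> (F - X)) sums L \<and> u < L \<and> L < v)"
proof -
  have a0: "a \<longlonglongrightarrow> 0"
    and P: "filterlim (\<lambda>n. \<Sum>i<n. max (a i) 0) at_top sequentially"
    and Q: "filterlim (\<lambda>n. \<Sum>i<n. min (a i) 0) at_bot sequentially"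
    using a by (auto simp: S_cc_def)
  define b where "b i = (if i \<in> X then - a i else a i)" for i
  have M: "(\<lambda>n. - (\<Sum>i<n. mask a X i)) \<longlonglongrightarrow> - c"
    using X by (intro tendsto_minus) (simp add: sums_def)
  have "(\<lambda>i. \<bar>b i\<bar>) = (\<lambda>i. \<bar>a i\<bar>)" by (auto simp: b_def)
  hence b0: "b \<longlonglongrightarrow> 0" using a0 tendsto_rabs_zero_iff[of a sequentially]
    tendsto_rabs_zero_iff[of b sequentially] by simp
  have pw1: "max (b i) 0 = - mask a X i + max (a i) 0" for i by (auto simp: b_def mask_def max_def)
  have pw2: "min (b i) 0 = - mask a X i + min (a i) 0" for i by (auto simp: b_def mask_def min_def)
  have eP: "(\<lambda>n. \<Sum>i<n. max (b i) 0) = (\<lambda>n. - (\<Sum>i<n. mask a X i) + (\<Sum>i<n. max (a i) 0))"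
    by (rule ext) (simp only: pw1 sum.distrib sum_negf)
  have Pb: "filterlim (\<lambda>n. \<Sum>i<n. max (b i) 0) at_top sequentially"
    unfolding eP by (rule filterlim_tendsto_add_at_top[OF M P])
  have eQ: "(\<lambda>n. \<Sum>i<n. min (b i) 0) = (\<lambda>n. - (\<Sum>i<n. mask a X i) + (\<Sum>i<n. min (a i) 0))"
    by (rule ext) (simp only: pw2 sum.distrib sum_negf)
  have Qb: "filterlim (\<lambda>n. \<Sum>i<n. min (b i) 0) at_bot sequentially"
    unfolding eQ by (rule filterlim_tendsto_add_at_bot_iff[OF M, THEN iffD2, OF Q])
  have d: "(v - u) / 2 > 0" using uv by simp
  obtain F where F: "finite F" "\<bar>sum b F - ((u + v) / 2 - c)\<bar> < (v - u) / 2"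
    using greedy[OF b0 Pb Qb d] by blast
  have "mask a ((X - F) \<union> (F - X)) = (\<lambda>i. mask a X i + (if i \<in> F then b i else 0))"
    by (auto simp: mask_def b_def)
  moreover have "(\<lambda>i. mask a X i + (if i \<in> F then b i else 0)) sums (c + sum b F)"
    by (rule sums_add[OF X sums_If_finite_set[OF F(1)]])
  moreover have h1: "sum b F - ((u + v) / 2 - c) < (v - u) / 2"
    and h2: "- (sum b F - ((u + v) / 2 - c)) < (v - u) / 2"
    using F(2) by (auto simp only: abs_less_iff)
  moreover have "u < c + sum b F" using h2 by (simp add: field_simps)
  moreover have "c + sum b F < v" using h1 by (simp add: field_simps)
  ultimately show ?thesis using F
    by (intro exI[of _ F] conjI exI[of _ "c + sum b F"]) auto
qed



lemma small_eventually:
  fixes a :: "nat \<Rightarrow> real"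
  assumes "a \<longlonglongrightarrow> 0" "e > 0"
  shows "\<exists>i\<ge>m. \<bar>a i\<bar> < e"
proof -
  obtain no where "\<forall>n\<ge>no. norm (a n - 0) < e" using LIMSEQ_D[OF assms] by blast
  then show ?thesis by (intro exI[of _ "max m no"]) auto
qed

lemma initial_X:
  fixes a :: "nat \<Rightarrow> real"
  assumes a0: "a \<longlonglongrightarrow> 0"
  shows "\<exists>X\<in>inf_coinf. summable (mask a X)"
proof -
  define r where "r = rec_nat (LEAST i. \<bar>a i\<bar> < 1)
      (\<lambda>n p. LEAST i. p + 2 \<le> i \<and> \<bar>a i\<bar> < (1/2) ^ Suc n)"
  have r0: "r 0 = (LEAST i. \<bar>a i\<bar> < 1)" by (simp add: r_def)
  have rS: "r (Suc n) = (LEAST i. r n + 2 \<le> i \<and> \<bar>a i\<bar> < (1/2) ^ Suc n)" for n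
    by (simp add: r_def)
  have ex: "\<exists>i. m \<le> i \<and> \<bar>a i\<bar> < (1/2) ^ k" for m k
    using small_eventually[OF a0, of "(1/2)^k" m] by auto
  have P0: "\<bar>a (r 0)\<bar> < (1/2)^0"
    unfolding r0 using ex[of 0 0] by (auto intro: LeastI_ex)
  have PS: "r n + 2 \<le> r (Suc n) \<and> \<bar>a (r (Suc n))\<bar> < (1/2) ^ Suc n" for n
    unfolding rS by (rule LeastI_ex) (rule ex)
  have P: "\<bar>a (r n)\<bar> < (1/2) ^ n" for n
    using P0 PS by (cases n) auto
  have sm: "strict_mono r" unfolding strict_mono_Suc_iff using PS
    by (metis add_lessD1 less_add_Suc1 order_less_le_trans numeral_2_eq_2 add_Suc_right)
  have inf1: "infinite (range r)" using sm strict_mono_imp_inj_on range_inj_infinite by blast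
  have notin: "r n + 1 \<notin> range r" for n
  proof
    assume "r n + 1 \<in> range r"
    then obtain m where m: "r m = r n + 1" by auto
    show False
    proof (cases "m \<le> n")
      case True
      then have "r m \<le> r n" using sm by (simp add: strict_mono_less_eq)
      then show False using m by simp
    next
      case False
      then have "Suc n \<le> m" by simp
      then have "r (Suc n) \<le> r m" using sm by (simp add: strict_mono_less_eq)
      then show False using m PS[of n] by simp
    qed
  qed
  have "inj (\<lambda>n. r n + 1)"
  proof (rule injI)
    fix m n assume "r m + 1 = r n + 1"
    then have "r m = r n" by simp
    then show "m = n" using strict_mono_imp_inj_on[OF sm] by (simp add: inj_eq)
  qed
  then have "infinite (range (\<lambda>n. r n + 1))" using range_inj_infinite by blast
  moreover have "range (\<lambda>n. r n + 1) \<subseteq> UNIV - range r" using notin by auto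
  ultimately have inf2: "infinite (UNIV - range r)" using infinite_super by blast
  have "summable (\<lambda>n. a (r n))"
  proof (rule summable_comparison_test)
    show "\<exists>N. \<forall>n\<ge>N. norm (a (r n)) \<le> (1/2) ^ n" using P by (auto intro: less_imp_le)
    show "summable (\<lambda>n. (1/2::real) ^ n)" by (rule summable_geometric) simp
  qed
  moreover have "summable (\<lambda>n. mask a (range r) (r n)) = summable (mask a (range r))"
    by (rule summable_mono_reindex[OF sm]) (simp add: mask_def)
  ultimately have "summable (mask a (range r))" by (simp add: mask_def)
  then show ?thesis using inf1 inf2 by (auto simp: inf_coinf_def)
qed



definition pairseq :: "(nat \<Rightarrow> nat) \<Rightarrow> (nat \<Rightarrow> real) \<Rightarrow> nat \<Rightarrow> real" where
  "pairseq x c i = (if i \<in> range x then c (inv x i)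
     else if i \<in> range (\<lambda>k. Suc (x k)) then - c (inv (\<lambda>k. Suc (x k)) i) else 0)"

definition spaced :: "(nat \<Rightarrow> nat) \<Rightarrow> bool" where
  "spaced x \<longleftrightarrow> (\<forall>k. Suc (x k) < x (Suc k))"

lemma sp_strict_mono:
  assumes sp: "spaced x"
  shows "strict_mono x"
  unfolding strict_mono_Suc_iff using sp Suc_lessD unfolding spaced_def by blast

lemma sp_neq:
  assumes sp: "spaced x"
  shows "Suc (x k) \<noteq> x l"
proof
  assume eq: "Suc (x k) = x l"
  have sm: "strict_mono x" by (rule sp_strict_mono[OF sp])
  show False
  proof (cases "l \<le> k")
    case True then have "x l \<le> x k" using sm by (simp add: strict_mono_less_eq)
    then show False using eq by simp
  next
    case False then have "Suc k \<le> l" by simp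
    then have "x (Suc k) \<le> x l" using sm by (simp add: strict_mono_less_eq)
    then show False using eq sp unfolding spaced_def by (metis less_le_trans not_less_iff_gr_or_eq)
  qed
qed

lemma ps_x:
  assumes sp: "spaced x"
  shows "pairseq x c (x k) = c k"
proof -
  have "inj x" using sp_strict_mono[OF sp] strict_mono_imp_inj_on by blast
  then show ?thesis by (simp add: pairseq_def)
qed

lemma ps_x1:
  assumes sp: "spaced x"
  shows "pairseq x c (Suc (x k)) = - c k"
proof -
  have "inj x" using sp_strict_mono[OF sp] strict_mono_imp_inj_on by blast
  then have inj1: "inj (\<lambda>k. Suc (x k))" by (simp add: inj_on_def)
  have "Suc (x k) \<notin> range x" using sp_neq[OF sp] by auto
  moreover have "inv (\<lambda>k. Suc (x k)) (Suc (x k)) = k" using inv_f_f[OF inj1] by simp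
  ultimately show ?thesis by (simp add: pairseq_def)
qed

lemma ps_0:
  assumes "\<And>k. i \<noteq> x k \<and> i \<noteq> Suc (x k)"
  shows "pairseq x c i = 0"
  using assms by (auto simp: pairseq_def)

lemma G:
  assumes sp: "spaced x"
    and h: "\<And>i. (\<And>k. i \<noteq> x k \<and> i \<noteq> Suc (x k)) \<Longrightarrow> h i = (0::real)"
  shows "(\<Sum>i<n. h i) = (\<Sum>k\<in>{k. x k < n}. h (x k)) + (\<Sum>k\<in>{k. Suc (x k) < n}. h (Suc (x k)))"
proof (induction n)
  case 0
  then show ?case by simp
next
  case (Suc n)
  have sm: "strict_mono x" by (rule sp_strict_mono[OF sp])
  have inj: "inj x" using sm strict_mono_imp_inj_on by blast
  have le: "k \<le> x k" for k using sm by (simp add: strict_mono_imp_increasing)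
  have fin1: "finite {k. x k < m}" for m
    by (rule finite_subset[of _ "{..<m}"]) (auto intro: le_less_trans[OF le])
  have fin2: "finite {k. Suc (x k) < m}" for m
    by (rule finite_subset[of _ "{..<m}"]) (auto intro: le_less_trans[OF le])
  consider (a) k where "n = x k" | (b) k where "n = Suc (x k)" | (c) "\<And>k. n \<noteq> x k \<and> n \<noteq> Suc (x k)"
    by blast
  then show ?case
  proof cases
    case a
    have s1: "{k'. x k' < Suc n} = insert k {k'. x k' < n}" using a inj by (auto simp: less_Suc_eq inj_eq)
    have s2: "{k'. Suc (x k') < Suc n} = {k'. Suc (x k') < n}"
      using a sp_neq[OF sp] by (auto simp: less_Suc_eq)
    have notin: "k \<notin> {k'. x k' < n}" using a by simp
    have e1: "(\<Sum>k\<in>{k'. x k' < Suc n}. h (x k)) = h n + (\<Sum>k\<in>{k'. x k' < n}. h (x k))"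
      unfolding s1 using notin fin1 a by (simp add: sum.insert)
    have e2: "(\<Sum>k\<in>{k'. Suc (x k') < Suc n}. h (Suc (x k))) = (\<Sum>k\<in>{k'. Suc (x k') < n}. h (Suc (x k)))"
      by (simp only: s2)
    show ?thesis unfolding sum.lessThan_Suc Suc.IH e1 e2 by linarith
  next
    case b
    have s1: "{k'. x k' < Suc n} = {k'. x k' < n}"
      using b sp_neq[OF sp] sp_neq[OF sp, THEN not_sym] by (auto simp: less_Suc_eq)
    have s2: "{k'. Suc (x k') < Suc n} = insert k {k'. Suc (x k') < n}" using b inj
      by (auto simp: less_Suc_eq inj_eq)
    have notin: "k \<notin> {k'. Suc (x k') < n}" using b by simp
    have e2: "(\<Sum>k\<in>{k'. Suc (x k') < Suc n}. h (Suc (x k))) = h n + (\<Sum>k\<in>{k'. Suc (x k') < n}. h (Suc (x k)))"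
      unfolding s2 using notin fin1 fin2 b by (simp add: sum.insert)
    have e1: "(\<Sum>k\<in>{k'. x k' < Suc n}. h (x k)) = (\<Sum>k\<in>{k'. x k' < n}. h (x k))"
      by (simp only: s1)
    show ?thesis unfolding sum.lessThan_Suc Suc.IH e1 e2 by linarith
  next
    case c
    have s1: "{k'. x k' < Suc n} = {k'. x k' < n}" using c by (auto simp: less_Suc_eq)
    have s2: "{k'. Suc (x k') < Suc n} = {k'. Suc (x k') < n}" using c by (auto simp: less_Suc_eq)
    have e1: "(\<Sum>k\<in>{k'. x k' < Suc n}. h (x k)) = (\<Sum>k\<in>{k'. x k' < n}. h (x k))"
      by (simp only: s1)
    have e2: "(\<Sum>k\<in>{k'. Suc (x k') < Suc n}. h (Suc (x k))) = (\<Sum>k\<in>{k'. Suc (x k') < n}. h (Suc (x k)))"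
      by (simp only: s2)
    show ?thesis unfolding sum.lessThan_Suc Suc.IH e1 e2 using h[OF c] by linarith
  qed
qed

lemma GK:
  assumes sp: "spaced x"
    and h: "\<And>i. (\<And>k. i \<noteq> x k \<and> i \<noteq> Suc (x k)) \<Longrightarrow> h i = (0::real)"
  shows "(\<Sum>i<x K. h i) = (\<Sum>k<K. h (x k) + h (Suc (x k)))"
proof -
  have sm: "strict_mono x" by (rule sp_strict_mono[OF sp])
  have s1: "{k. x k < x K} = {..<K}" using sm by (auto simp: strict_mono_less)
  have s2: "{k. Suc (x k) < x K} = {..<K}"
  proof (auto)
    fix k assume "Suc (x k) < x K"
    then have "x k < x K" by simp
    then show "k < K" using sm by (simp add: strict_mono_less)
  next
    fix k assume "k < K"
    then have "Suc k \<le> K" by simp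
    then have "x (Suc k) \<le> x K" using sm by (simp add: strict_mono_less_eq)
    then show "Suc (x k) < x K" using sp unfolding spaced_def by (meson less_le_trans)
  qed
  show ?thesis using G[OF sp h, where n = "x K"] by (simp add: s1 s2 sum.distrib)
qed



lemma ps_h0:
  "(\<And>k. i \<noteq> x k \<and> i \<noteq> Suc (x k)) \<Longrightarrow> g (pairseq x c i) = (0::real) \<Longrightarrow> g (pairseq x c i) = 0"
  by simp

lemma ps_partial:
  assumes sp: "spaced x"
  shows "(\<Sum>i<n. pairseq x c i) = (\<Sum>k\<in>{k. Suc (x k) = n}. c k)"
proof -
  have sm: "strict_mono x" by (rule sp_strict_mono[OF sp])
  have le: "k \<le> x k" for k using sm by (simp add: strict_mono_imp_increasing)
  have fin1: "finite {k. x k < n}"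
    by (rule finite_subset[of _ "{..<n}"]) (auto intro: le_less_trans[OF le])
  have "(\<Sum>i<n. pairseq x c i) = (\<Sum>k\<in>{k. x k < n}. c k) - (\<Sum>k\<in>{k. Suc (x k) < n}. c k)"
    using G[OF sp, of "pairseq x c" n] ps_0[of _ x c] by (simp add: ps_x[OF sp] ps_x1[OF sp] sum_negf)
  also have "\<dots> = (\<Sum>k\<in>{k. x k < n} - {k. Suc (x k) < n}. c k)"
    by (rule sum_diff[symmetric]) (auto simp: fin1)
  also have "{k. x k < n} - {k. Suc (x k) < n} = {k. Suc (x k) = n}" by auto
  finally show ?thesis .
qed

lemma ps_in_Scc:
  assumes sp: "spaced x"
    and cpos: "\<And>k. c k \<ge> 0" and c0: "c \<longlonglongrightarrow> 0"
    and cinf: "filterlim (\<lambda>K. \<Sum>k<K. c k) at_top sequentially"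
    and crat: "\<And>k. c k \<in> \<rat>"
  shows "pairseq x c \<in> S_cc"
proof -
  define a where "a = pairseq x c"
  have sm: "strict_mono x" by (rule sp_strict_mono[OF sp])
  have inj: "inj x" using sm strict_mono_imp_inj_on by blast
  have rat: "a i \<in> \<rat>" for i using crat by (auto simp: a_def pairseq_def)
  have big: "\<exists>K. \<forall>k\<ge>K. c k < r" if "r > 0" for r
    using LIMSEQ_D[OF c0 that] cpos by force
  have a0: "a \<longlonglongrightarrow> 0"
  proof (rule LIMSEQ_I)
    fix r :: real assume r: "0 < r"
    obtain K where K: "\<forall>k\<ge>K. c k < r" using big[OF r] by blast
    have "\<bar>a i\<bar> < r" if i: "i \<ge> Suc (x K)" for i
    proof (cases "\<exists>k. i = x k \<or> i = Suc (x k)")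
      case True
      then obtain k where k: "i = x k \<or> i = Suc (x k)" by blast
      then have "x K < x k \<or> x K \<le> x k" using i by auto
      then have "K \<le> k" using sm by (metis strict_mono_less strict_mono_less_eq less_imp_le)
      then show ?thesis using k K cpos[of k]
        by (auto simp: a_def ps_x[OF sp] ps_x1[OF sp])
    next
      case False
      then show ?thesis using ps_0[of i x c] r by (auto simp: a_def)
    qed
    then show "\<exists>no. \<forall>n\<ge>no. norm (a n - 0) < r" by auto
  qed
  have P0: "(\<lambda>n. \<Sum>i<n. a i) \<longlonglongrightarrow> 0"
  proof (rule LIMSEQ_I)
    fix r :: real assume r: "0 < r"
    obtain K where K: "\<forall>k\<ge>K. c k < r" using big[OF r] by blast
    have "\<bar>\<Sum>i<n. a i\<bar> < r" if n: "n \<ge> Suc (x K)" for n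
    proof (cases "\<exists>k. Suc (x k) = n")
      case True
      then obtain k where k: "Suc (x k) = n" by blast
      then have "{k. Suc (x k) = n} = {k}" using inj by (auto simp: inj_eq)
      moreover have "K \<le> k" using k n sm by (metis Suc_le_mono strict_mono_less_eq)
      ultimately show ?thesis using K cpos[of k] by (simp add: a_def ps_partial[OF sp])
    next
      case False
      then have "{k. Suc (x k) = n} = {}" by auto
      then show ?thesis using r by (simp add: a_def ps_partial[OF sp])
    qed
    then show "\<exists>no. \<forall>n\<ge>no. norm ((\<Sum>i<n. a i) - 0) < r" by auto
  qed
  then have sums: "a sums 0" by (simp add: sums_def)
  have hmax: "(\<lambda>i. max (a i) 0) i = 0" if "\<And>k. i \<noteq> x k \<and> i \<noteq> Suc (x k)" for i
    using ps_0[of i x c, OF that] by (simp add: a_def)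
  have Pmax: "(\<Sum>i<x K. max (a i) 0) = (\<Sum>k<K. c k)" for K
    using GK[OF sp, of "\<lambda>i. max (a i) 0" K] hmax cpos
    by (simp add: a_def ps_x[OF sp] ps_x1[OF sp])
  have mono: "(\<Sum>i<m. max (a i) 0) \<le> (\<Sum>i<n. max (a i) 0)" if "m \<le> n" for m n
    by (rule sum_mono2) (use that in auto)
  have Pinf: "filterlim (\<lambda>n. \<Sum>i<n. max (a i) 0) at_top sequentially"
    unfolding filterlim_at_top
  proof
    fix Z :: real
    have "eventually (\<lambda>K. Z \<le> (\<Sum>k<K. c k)) sequentially" using cinf by (simp add: filterlim_at_top)
    then obtain K where K: "Z \<le> (\<Sum>k<K. c k)" using eventually_sequentially by auto
    have "Z \<le> (\<Sum>i<n. max (a i) 0)" if "n \<ge> x K" for n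
      using K Pmax[of K] mono[OF that] by simp
    then show "eventually (\<lambda>n. Z \<le> (\<Sum>i<n. max (a i) 0)) sequentially"
      using eventually_sequentially by blast
  qed
  have emin: "(\<lambda>n. \<Sum>i<n. min (a i) 0) = (\<lambda>n. (\<Sum>i<n. a i) + - (\<Sum>i<n. max (a i) 0))"
  proof (rule ext)
    fix n
    have pw: "min (a i) 0 = a i + - max (a i) 0" for i by (simp add: min_def max_def)
    show "(\<Sum>i<n. min (a i) 0) = (\<Sum>i<n. a i) + - (\<Sum>i<n. max (a i) 0)"
      by (simp only: pw sum.distrib sum_negf)
  qed
  have "filterlim (\<lambda>n. - (\<Sum>i<n. max (a i) 0)) at_bot sequentially"
    by (rule filterlim_uminus_at_top[THEN iffD1, OF Pinf])
  then have Qinf: "filterlim (\<lambda>n. \<Sum>i<n. min (a i) 0) at_bot sequentially"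
    unfolding emin by (rule filterlim_tendsto_add_at_bot_iff[OF P0, THEN iffD2])
  show ?thesis
    using rat a0 sums Pinf Qinf unfolding S_cc_def a_def[symmetric]
    by (auto simp: sums_summable)
qed



fun st :: "nat \<Rightarrow> nat \<times> nat" where
  "st 0 = (0, 0)"
| "st (Suc k) = (if snd (st k) < fst (st k) then (fst (st k), Suc (snd (st k))) else (Suc (fst (st k)), 0))"

fun start :: "nat \<Rightarrow> nat" where
  "start 0 = 0"
| "start (Suc n) = start n + Suc n"

definition cst :: "nat \<Rightarrow> real" where
  "cst k = 1 / real (Suc (fst (st k)))"

lemma st_in_stage: "st (start n) = (n, 0) \<Longrightarrow> i \<le> n \<Longrightarrow> st (start n + i) = (n, i)"
  by (induction i) auto

lemma st_start0: "st (start n) = (n, 0)"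
proof (induction n)
  case 0 then show ?case by simp
next
  case (Suc n)
  have "st (start n + n) = (n, n)" by (rule st_in_stage[OF Suc]) simp
  then have "st (Suc (start n + n)) = (Suc n, 0)" by simp
  then show ?case by simp
qed

lemma st_start: "i \<le> n \<Longrightarrow> st (start n + i) = (n, i)"
  by (rule st_in_stage[OF st_start0])

lemma decomp: "\<exists>n i. i \<le> n \<and> k = start n + i"
proof (induction k)
  case 0 then show ?case by (intro exI[of _ 0]) simp
next
  case (Suc k)
  then obtain n i where ni: "i \<le> n" "k = start n + i" by blast
  show ?case
  proof (cases "i < n")
    case True then show ?thesis using ni by (intro exI[of _ n] exI[of _ "Suc i"]) auto
  next
    case False then have "i = n" using ni by simp
    then show ?thesis using ni by (intro exI[of _ "Suc n"] exI[of _ 0]) auto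
  qed
qed

lemma start_mono: "n \<le> m \<Longrightarrow> start n \<le> start m"
  by (induction m) (auto simp: le_Suc_eq)

lemma start_strict_mono: "strict_mono start"
  unfolding strict_mono_Suc_iff by simp

lemma stage_ge:
  assumes "start m \<le> k" shows "m \<le> fst (st k)"
proof -
  obtain n i where ni: "i \<le> n" "k = start n + i" using decomp by blast
  have "m \<le> n"
  proof (rule ccontr)
    assume "\<not> m \<le> n"
    then have "Suc n \<le> m" by simp
    then have "start (Suc n) \<le> start m" by (rule start_mono)
    then show False using assms ni by simp
  qed
  then show ?thesis using ni st_start by simp
qed

lemma cst_stage: "i \<le> n \<Longrightarrow> cst (start n + i) = 1 / real (Suc n)"
  by (simp add: cst_def st_start)

lemma sum_one_stage:
  assumes "\<And>k. k \<in> {start n..<start (Suc n)} \<Longrightarrow> g k = cst k"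
  shows "(\<Sum>k\<in>{start n..<start (Suc n)}. g k) = 1"
proof -
  have "(\<Sum>k\<in>{start n..<start (Suc n)}. g k) = (\<Sum>k\<in>{start n..<start (Suc n)}. cst k)"
    using assms by (rule sum.cong[OF refl])
  also have "\<dots> = (\<Sum>k\<in>{0 + start n..<Suc n + start n}. cst k)" by (simp add: add.commute)
  also have "\<dots> = (\<Sum>i\<in>{0..<Suc n}. cst (i + start n))" by (rule sum.shift_bounds_nat_ivl)
  also have "\<dots> = (\<Sum>i\<in>{0..<Suc n}. 1 / real (Suc n))"
  proof (rule sum.cong[OF refl])
    fix i assume "i \<in> {0..<Suc n}"
    then have "i \<le> n" by simp
    then show "cst (i + start n) = 1 / real (Suc n)" using cst_stage[of i n] by (simp add: add.commute)
  qed
  also have "\<dots> = 1" by simp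
  finally show ?thesis .
qed

lemma sum_cst_start: "(\<Sum>k<start n. cst k) = real n"
proof (induction n)
  case 0 then show ?case by simp
next
  case (Suc n)
  have "(\<Sum>k<start (Suc n). cst k) = (\<Sum>k<start n. cst k) + (\<Sum>k\<in>{start n..<start (Suc n)}. cst k)"
    by (rule sum_split_N) simp
  also have "(\<Sum>k\<in>{start n..<start (Suc n)}. cst k) = 1" by (rule sum_one_stage) simp
  finally show ?case using Suc by simp
qed

lemma cst_pos: "cst k \<ge> 0" by (simp add: cst_def)

lemma cst_rat: "cst k \<in> \<rat>" by (simp add: cst_def)

lemma cst_0: "cst \<longlonglongrightarrow> 0"
proof (rule LIMSEQ_I)
  fix r :: real assume r: "0 < r"
  obtain m :: nat where m: "1 / r < real m" using reals_Archimedean2 by blast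
  have "norm (cst k - 0) < r" if "k \<ge> start m" for k
  proof -
    have "m \<le> fst (st k)" using stage_ge that by blast
    then have "real m < real (Suc (fst (st k)))" by simp
    then have "1 / r < real (Suc (fst (st k)))" using m by linarith
    then have "1 / real (Suc (fst (st k))) < r" using r
      by (simp add: field_simps)
    then show ?thesis by (simp add: cst_def)
  qed
  then show "\<exists>no. \<forall>n\<ge>no. norm (cst n - 0) < r" by blast
qed

lemma cst_inf: "filterlim (\<lambda>K. \<Sum>k<K. cst k) at_top sequentially"
  unfolding filterlim_at_top
proof
  fix Z :: real
  obtain m :: nat where m: "Z < real m" using reals_Archimedean2 by blast
  have "Z \<le> (\<Sum>k<K. cst k)" if "K \<ge> start m" for K
  proof -
    have "(\<Sum>k<start m. cst k) \<le> (\<Sum>k<K. cst k)"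
      by (rule sum_mono2) (use that cst_pos in auto)
    then show ?thesis using m sum_cst_start[of m] by simp
  qed
  then show "eventually (\<lambda>K. Z \<le> (\<Sum>k<K. cst k)) sequentially"
    using eventually_sequentially by blast
qed



lemma boundary:
  assumes "j \<in> X" "m \<notin> X" "j < m"
  shows "\<exists>i. j \<le> i \<and> i \<in> X \<and> Suc i \<notin> X"
  using assms
proof (induction m)
  case 0 then show ?case by simp
next
  case (Suc m)
  show ?case
  proof (cases "m \<in> X")
    case True then show ?thesis using Suc by (intro exI[of _ m]) auto
  next
    case False
    then have "j < m" using Suc.prems by (metis less_SucE)
    then show ?thesis using Suc.IH Suc.prems False by blast
  qed
qed

lemma boundary_ex:
  assumes "X \<in> inf_coinf"
  shows "\<exists>i. p \<le> i \<and> i \<in> X \<and> Suc i \<notin> X"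
proof -
  have "infinite X" "infinite (UNIV - X)" using assms by (auto simp: inf_coinf_def)
  then obtain j where j: "j \<in> X" "p \<le> j" using infinite_nat_iff_unbounded_le by blast
  obtain m where m: "m \<in> UNIV - X" "Suc j \<le> m"
    using \<open>infinite (UNIV - X)\<close> infinite_nat_iff_unbounded_le by blast
  obtain i where "j \<le> i" "i \<in> X" "Suc i \<notin> X" using boundary[of j X m] j m by auto
  then show ?thesis using j by (intro exI[of _ i]) auto
qed

lemma strict_mono_pe: "strict_mono (\<lambda>m. prod_encode (j, m))"
  unfolding strict_mono_Suc_iff by (simp add: prod_encode_def)

lemma diag:
  fixes f :: "nat \<Rightarrow> nat set"
  assumes f: "\<And>j. f j \<in> inf_coinf"
  shows "\<exists>a\<in>S_cc. \<forall>j. \<not> summable (mask a (f j))"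
proof -
  define T where "T k = f (fst (prod_decode (fst (st k))))" for k
  have T: "T k \<in> inf_coinf" for k using f by (simp add: T_def)
  define x where "x = rec_nat (LEAST i. i \<in> T 0 \<and> Suc i \<notin> T 0)
      (\<lambda>k p. LEAST i. Suc (Suc p) \<le> i \<and> i \<in> T (Suc k) \<and> Suc i \<notin> T (Suc k))"
  have "\<exists>i. i \<in> T 0 \<and> Suc i \<notin> T 0" using boundary_ex[OF T, of 0 0] by auto
  then have "(LEAST i. i \<in> T 0 \<and> Suc i \<notin> T 0) \<in> T 0 \<and> Suc (LEAST i. i \<in> T 0 \<and> Suc i \<notin> T 0) \<notin> T 0"
    by (rule LeastI_ex)
  then have x0: "x 0 \<in> T 0 \<and> Suc (x 0) \<notin> T 0" by (simp add: x_def)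
  have xS: "Suc (Suc (x k)) \<le> x (Suc k) \<and> x (Suc k) \<in> T (Suc k) \<and> Suc (x (Suc k)) \<notin> T (Suc k)" for k
  proof -
    have "x (Suc k) = (LEAST i. Suc (Suc (x k)) \<le> i \<and> i \<in> T (Suc k) \<and> Suc i \<notin> T (Suc k))"
      by (simp add: x_def)
    moreover have "\<exists>i. Suc (Suc (x k)) \<le> i \<and> i \<in> T (Suc k) \<and> Suc i \<notin> T (Suc k)"
      using boundary_ex[OF T[of "Suc k"], of "Suc (Suc (x k))"] by auto
    ultimately show ?thesis using LeastI_ex[of "\<lambda>i. Suc (Suc (x k)) \<le> i \<and> i \<in> T (Suc k) \<and> Suc i \<notin> T (Suc k)"]
      by simp
  qed
  have sp: "spaced x" unfolding spaced_def using xS by (simp add: Suc_le_lessD)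
  have xT: "x k \<in> T k \<and> Suc (x k) \<notin> T k" for k using x0 xS by (cases k) auto
  define a where "a = pairseq x cst"
  have aS: "a \<in> S_cc" unfolding a_def
    by (rule ps_in_Scc[OF sp cst_pos cst_0 cst_inf cst_rat])
  have sm: "strict_mono x" by (rule sp_strict_mono[OF sp])
  have "\<not> summable (mask a (f j))" for j
  proof
    assume "summable (mask a (f j))"
    then obtain L where "mask a (f j) sums L" by (auto simp: summable_def)
    then have M: "(\<lambda>n. \<Sum>i<n. mask a (f j) i) \<longlonglongrightarrow> L" by (simp add: sums_def)
    define M where "M n = (\<Sum>i<n. mask a (f j) i)" for n
    define pe where "pe m = prod_encode (j, m)" for m
    have smpe: "strict_mono pe" unfolding pe_def by (rule strict_mono_pe)
    have s1: "strict_mono (\<lambda>m. x (start (pe m)))"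
      using sm start_strict_mono smpe by (simp add: strict_mono_def del: start.simps)
    have s2: "strict_mono (\<lambda>m. x (start (Suc (pe m))))"
      using sm start_strict_mono smpe by (simp add: strict_mono_def del: start.simps)
    have L1: "(\<lambda>m. M (x (start (pe m)))) \<longlonglongrightarrow> L"
      using LIMSEQ_subseq_LIMSEQ[OF M s1] by (simp add: M_def o_def)
    have L2: "(\<lambda>m. M (x (start (Suc (pe m))))) \<longlonglongrightarrow> L"
      using LIMSEQ_subseq_LIMSEQ[OF M s2] by (simp add: M_def o_def)
    have D0: "(\<lambda>m. M (x (start (Suc (pe m)))) - M (x (start (pe m)))) \<longlonglongrightarrow> 0"
      using tendsto_diff[OF L2 L1] by simp
    have hz: "mask a (f j) i = 0" if "\<And>k. i \<noteq> x k \<and> i \<noteq> Suc (x k)" for i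
      using ps_0[of i x cst, OF that] by (simp add: a_def mask_def)
    have D1: "M (x (start (Suc (pe m)))) - M (x (start (pe m))) = 1" for m
    proof -
      let ?g = "\<lambda>k. mask a (f j) (x k) + mask a (f j) (Suc (x k))"
      have "M (x (start (Suc (pe m)))) = (\<Sum>k<start (Suc (pe m)). ?g k)"
        unfolding M_def by (rule GK[OF sp]) (rule hz, blast)
      also have "\<dots> = (\<Sum>k<start (pe m). ?g k) + (\<Sum>k\<in>{start (pe m)..<start (Suc (pe m))}. ?g k)"
        by (rule sum_split_N) simp
      also have "(\<Sum>k<start (pe m). ?g k) = M (x (start (pe m)))"
        unfolding M_def by (rule GK[OF sp, symmetric]) (rule hz, blast)
      also have "(\<Sum>k\<in>{start (pe m)..<start (Suc (pe m))}. ?g k) = 1"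
      proof (rule sum_one_stage)
        fix k assume k: "k \<in> {start (pe m)..<start (Suc (pe m))}"
        then obtain i where i: "i \<le> pe m" "k = start (pe m) + i"
          by (metis atLeastLessThan_iff le_add_diff_inverse less_Suc_eq_le nat_add_left_cancel_less start.simps(2))
        then have "fst (st k) = pe m" by (simp add: st_start)
        then have "T k = f j" by (simp add: T_def pe_def)
        then show "?g k = cst k" using xT[of k]
          by (simp add: mask_def a_def ps_x[OF sp])
      qed
      finally show ?thesis by simp
    qed
    show False using D0 D1 LIMSEQ_const_iff[of "1::real" 0] by simp
  qed
  then show ?thesis using aS by blast
qed






lemma evens_inf_coinf: "range (\<lambda>n::nat. 2 * n) \<in> inf_coinf"
proof -
  have "inj (\<lambda>n::nat. 2 * n)" by (auto simp: inj_on_def)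
  then have i1: "infinite (range (\<lambda>n::nat. 2 * n))" using range_inj_infinite by blast
  have "inj (\<lambda>n::nat. 2 * n + 1)" by (auto simp: inj_on_def)
  then have "infinite (range (\<lambda>n::nat. 2 * n + 1))" using range_inj_infinite by blast
  moreover have "range (\<lambda>n::nat. 2 * n + 1) \<subseteq> UNIV - range (\<lambda>n::nat. 2 * n)" by auto presburger
  ultimately have "infinite (UNIV - range (\<lambda>n::nat. 2 * n))" using infinite_super by blast
  then show ?thesis using i1 by (simp add: inf_coinf_def)
qed

lemma ss_c_infinite:
  assumes "ss_c_family \<X>" shows "infinite \<X>"
proof
  assume fin: "finite \<X>"
  define \<X>' where "\<X>' = insert (range (\<lambda>n::nat. 2 * n)) \<X>"
  have sub: "\<X>' \<subseteq> inf_coinf" using assms evens_inf_coinf by (auto simp: \<X>'_def ss_c_family_def)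
  have cnt: "countable \<X>'" using fin by (simp add: \<X>'_def countable_finite)
  have ne: "\<X>' \<noteq> {}" by (simp add: \<X>'_def)
  define f where "f = from_nat_into \<X>'"
  have "f j \<in> inf_coinf" for j using from_nat_into[OF ne] sub by (auto simp: f_def)
  then obtain a where a: "a \<in> S_cc" "\<forall>j. \<not> summable (mask a (f j))" using diag by blast
  obtain X where X: "X \<in> \<X>" "summable (subser a X)" using assms a(1) by (auto simp: ss_c_family_def)
  have "X \<in> inf_coinf" using X assms by (auto simp: ss_c_family_def)
  then have "summable (mask a X)" using X subser_summable_iff by (auto simp: inf_coinf_def)
  moreover obtain j where "f j = X" using from_nat_into_surj[OF cnt] X by (auto simp: f_def \<X>'_def)
  ultimately show False using a by blast
qed

lemma mincard_prop:
  assumes "P X0"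
  shows "P (SOME \<X>. P \<X> \<and> (\<forall>\<Y>. P \<Y> \<longrightarrow> (card_of \<X>, card_of \<Y>) \<in> ordLeq))
    \<and> (\<forall>\<Y>. P \<Y> \<longrightarrow> (card_of (SOME \<X>. P \<X> \<and> (\<forall>\<Y>. P \<Y> \<longrightarrow> (card_of \<X>, card_of \<Y>) \<in> ordLeq)), card_of \<Y>) \<in> ordLeq)"
proof -
  define R where "R = {card_of \<X> | \<X>. P \<X>}"
  have "R \<noteq> {}" using assms by (auto simp: R_def)
  moreover have "\<forall>r\<in>R. Well_order r" by (auto simp: R_def card_of_Well_order)
  ultimately obtain r where r: "r \<in> R" "\<forall>r'\<in>R. r \<le>o r'" using exists_minim_Well_order by blast
  then obtain \<X>1 where "P \<X>1" "r = card_of \<X>1" by (auto simp: R_def)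
  then have "\<exists>\<X>. P \<X> \<and> (\<forall>\<Y>. P \<Y> \<longrightarrow> (card_of \<X>, card_of \<Y>) \<in> ordLeq)"
    using r by (auto simp: R_def)
  then show ?thesis by (rule someI_ex)
qed

lemma mincard_le:
  assumes "P X0" "P Y" shows "mincard P \<le>o |Y|"
  using mincard_prop[of P X0] assms unfolding mincard_def by blast

lemma mincard_ex:
  assumes "P X0" shows "\<exists>X. P X \<and> mincard P = |X|"
  using mincard_prop[of P X0] assms unfolding mincard_def by blast

lemma ss_c_exists: "ss_c_family inf_coinf"
  unfolding ss_c_family_def
proof (intro conjI ballI)
  fix a assume a: "a \<in> S_cc"
  then have "a \<longlonglongrightarrow> 0" by (simp add: S_cc_def)
  then obtain X where X: "X \<in> inf_coinf" "summable (mask a X)" using initial_X by blast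
  then show "\<exists>X\<in>inf_coinf. summable (subser a X)"
    using subser_summable_iff by (auto simp: inf_coinf_def)
qed simp

lemma image_card_le:
  assumes "infinite \<X>"
  shows "|g ` (\<X> \<times> (UNIV :: nat list set))| \<le>o |\<X>|"
proof -
  have "|g ` (\<X> \<times> (UNIV :: nat list set))| \<le>o |\<X> \<times> (UNIV :: nat list set)|" by (rule card_of_image)
  moreover have "|(UNIV :: nat list set)| \<le>o |\<X>|"
  proof -
    have "|(UNIV :: nat list set)| \<le>o |UNIV :: nat set|" using countable_card_of_nat by blast
    moreover have "|UNIV :: nat set| \<le>o |\<X>|" using assms infinite_iff_card_of_nat by blast
    ultimately show ?thesis using ordLeq_transitive by blast
  qed
  then have "|\<X> \<times> (UNIV :: nat list set)| =o |\<X>|" using card_of_Times_infinite[OF assms] by blast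
  ultimately show ?thesis using ordLeq_ordIso_trans by blast
qed

lemma build:
  assumes Pc: "ss_c_family \<X>" and uv: "u < v"
  shows "\<forall>a\<in>S_cc. \<exists>X\<in>\<X>. \<exists>l. \<exists>L. mask a ((X - set l) \<union> (set l - X)) sums L \<and> u < L \<and> L < v"
proof
  fix a assume a: "a \<in> S_cc"
  obtain X where X: "X \<in> \<X>" "summable (subser a X)" using Pc a by (auto simp: ss_c_family_def)
  have "X \<in> inf_coinf" using X Pc by (auto simp: ss_c_family_def)
  then have "summable (mask a X)" using X subser_summable_iff by (auto simp: inf_coinf_def)
  then obtain c where "mask a X sums c" by (auto simp: summable_def)
  from core[OF a this uv] obtain F L where F: "finite F" "mask a ((X - F) \<union> (F - X)) sums L" "u < L" "L < v"
    by blast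
  obtain l where "set l = F" using finite_list[OF F(1)] by blast
  then show "\<exists>X\<in>\<X>. \<exists>l. \<exists>L. mask a ((X - set l) \<union> (set l - X)) sums L \<and> u < L \<and> L < v"
    using X F by blast
qed



theorem mainTheorem12:
  fixes \<epsilon> :: real and A :: "real set"
  assumes "\<epsilon> > 0"
    and "\<exists>u v. u < v \<and> {u<..<v} \<subseteq> A"
  shows "(mincard (ss_e_family \<epsilon>), mincard ss_c_family) \<in> ordIso
       \<and> (mincard (ss_l_family A), mincard ss_c_family) \<in> ordIso"
proof -
  obtain u v where uv: "u < v" "{u<..<v} \<subseteq> A" using assms(2) by blast
  obtain Xc where Xc: "ss_c_family Xc" "mincard ss_c_family = |Xc|"
    using mincard_ex[of ss_c_family inf_coinf, OF ss_c_exists] by blast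
  have infXc: "infinite Xc" by (rule ss_c_infinite[OF Xc(1)])
  have subXc: "Xc \<subseteq> inf_coinf" using Xc(1) by (simp add: ss_c_family_def)
  define Ye where "Ye = (\<lambda>(X, l). UNIV - ((X - set l) \<union> (set l - X))) ` (Xc \<times> (UNIV :: nat list set))"
  define Yl where "Yl = (\<lambda>(X, l). (X - set l) \<union> (set l - X)) ` (Xc \<times> (UNIV :: nat list set))"
  have Pe: "ss_e_family \<epsilon> Ye"
    unfolding ss_e_family_def
  proof (intro conjI ballI)
    show "Ye \<subseteq> inf_coinf" using subXc
      by (auto simp: Ye_def intro!: inf_coinf_compl inf_coinf_symdiff)
  next
    fix a assume a: "a \<in> S_cc"
    obtain X l L where XL: "X \<in> Xc" "mask a ((X - set l) \<union> (set l - X)) sums L" "- \<epsilon> < L" "L < \<epsilon>"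
      using build[OF Xc(1), of "-\<epsilon>" \<epsilon>] assms(1) a by force
    define Z where "Z = (X - set l) \<union> (set l - X)"
    have Zi: "Z \<in> inf_coinf" unfolding Z_def using XL subXc by (auto intro: inf_coinf_symdiff)
    have Yi: "UNIV - Z \<in> inf_coinf" by (rule inf_coinf_compl[OF Zi])
    have "a sums suminf a" using a by (simp add: S_cc_def summable_sums)
    then have "(\<lambda>i. a i - mask a Z i) sums (suminf a - L)" using XL(2) unfolding Z_def
      by (rule sums_diff)
    moreover have "(\<lambda>i. a i - mask a Z i) = mask a (UNIV - Z)" by (auto simp: mask_def)
    ultimately have "subser a (UNIV - Z) sums (suminf a - L)"
      using subser_sums_iff Yi by (auto simp: inf_coinf_def)
    moreover have "UNIV - Z \<in> Ye" using XL(1) by (auto simp: Ye_def Z_def)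
    ultimately show "\<exists>X\<in>Ye. \<exists>L. subser a X sums L \<and> L \<in> {suminf a - \<epsilon><..<suminf a + \<epsilon>}"
      using XL by (intro bexI[of _ "UNIV - Z"] exI[of _ "suminf a - L"]) auto
  qed
  have Pl: "ss_l_family A Yl"
    unfolding ss_l_family_def
  proof (intro conjI ballI)
    show "Yl \<subseteq> inf_coinf" using subXc
      by (auto simp: Yl_def intro!: inf_coinf_symdiff)
  next
    fix a assume a: "a \<in> S_cc"
    obtain X l L where XL: "X \<in> Xc" "mask a ((X - set l) \<union> (set l - X)) sums L" "u < L" "L < v"
      using build[OF Xc(1) uv(1)] a by force
    define Z where "Z = (X - set l) \<union> (set l - X)"
    have Zi: "Z \<in> inf_coinf" unfolding Z_def using XL subXc by (auto intro: inf_coinf_symdiff)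
    have "subser a Z sums L" using subser_sums_iff Zi XL(2) by (auto simp: inf_coinf_def Z_def)
    moreover have "Z \<in> Yl" using XL(1) by (auto simp: Yl_def Z_def)
    moreover have "L \<in> A" using uv XL by auto
    ultimately show "\<exists>X\<in>Yl. \<exists>L\<in>A. subser a X sums L" by blast
  qed
  have e2c: "ss_c_family Y" if hY: "ss_e_family \<epsilon> Y" for Y
  proof -
    have "\<forall>a\<in>S_cc. \<exists>X\<in>Y. summable (subser a X)"
    proof
      fix a assume "a \<in> S_cc"
      then obtain X L where "X \<in> Y" "subser a X sums L" using hY unfolding ss_e_family_def by blast
      then show "\<exists>X\<in>Y. summable (subser a X)" using sums_summable by blast
    qed
    then show ?thesis using hY unfolding ss_e_family_def ss_c_family_def by blast
  qed
  have l2c: "ss_c_family Y" if hY: "ss_l_family A Y" for Y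
  proof -
    have "\<forall>a\<in>S_cc. \<exists>X\<in>Y. summable (subser a X)"
    proof
      fix a assume "a \<in> S_cc"
      then obtain X L where "X \<in> Y" "subser a X sums L" using hY unfolding ss_l_family_def by blast
      then show "\<exists>X\<in>Y. summable (subser a X)" using sums_summable by blast
    qed
    then show ?thesis using hY unfolding ss_l_family_def ss_c_family_def by blast
  qed
  obtain Xe where Xe: "ss_e_family \<epsilon> Xe" "mincard (ss_e_family \<epsilon>) = |Xe|"
    using mincard_ex[of "ss_e_family \<epsilon>" Ye, OF Pe] by blast
  obtain Xl where Xl: "ss_l_family A Xl" "mincard (ss_l_family A) = |Xl|"
    using mincard_ex[of "ss_l_family A" Yl, OF Pl] by blast
  have "mincard (ss_e_family \<epsilon>) \<le>o |Ye|" by (rule mincard_le[of "ss_e_family \<epsilon>" Ye Ye, OF Pe Pe])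
  moreover have "|Ye| \<le>o |Xc|" unfolding Ye_def by (rule image_card_le[OF infXc])
  ultimately have e1: "mincard (ss_e_family \<epsilon>) \<le>o mincard ss_c_family"
    using Xc(2) ordLeq_transitive by metis
  have e2: "mincard ss_c_family \<le>o mincard (ss_e_family \<epsilon>)"
    using mincard_le[of ss_c_family Xc Xe, OF Xc(1) e2c[OF Xe(1)]] Xe(2) by simp
  have "mincard (ss_l_family A) \<le>o |Yl|" by (rule mincard_le[of "ss_l_family A" Yl Yl, OF Pl Pl])
  moreover have "|Yl| \<le>o |Xc|" unfolding Yl_def by (rule image_card_le[OF infXc])
  ultimately have l1: "mincard (ss_l_family A) \<le>o mincard ss_c_family"
    using Xc(2) ordLeq_transitive by metis
  have l2: "mincard ss_c_family \<le>o mincard (ss_l_family A)"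
    using mincard_le[of ss_c_family Xc Xl, OF Xc(1) l2c[OF Xl(1)]] Xl(2) by simp
  show ?thesis using e1 e2 l1 l2 ordIso_iff_ordLeq by blast
qed

end
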